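(* Every kite-free chordal graph is hereditarily connected-domishold.
   Context: The kite (co-fork) is the $5$-vertex graph obtained from a diamond ($K_4$ minus an edge) by adding a new vertex adjacent to exactly one of the two degree-$2$ vertices of the diamond. A graph is chordal if it has no induced cycle of length at least $4$. A connected dominating set of a connected graph $G$ is a set $S\subseteq V(G)$ such that every vertex outside $S$ has a neighbor in $S$ and $G[S]$ is connected; $G$ is connected-domishold if there exist $w:V(G)\to\mathbb{R}_{\ge0}$, $t\in\mathbb{R}_{\ge0}$ such that for all $S\subseteq V(G)$, $\sum_{x\in S}w(x)\ge t$ iff $S$ is a connected dominating set, disconnected graphs being connected-domishold by convention. $G$ is hereditarily connected-domishold if every induced subgraph of $G$ is connected-domishold. *)

theory Defs
  imports Main "HOL.Real"
begin

text \<open>A finite simple graph is given by a finite vertex set V and a symmetric,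
irreflexive adjacency relation E (only its restriction to V matters).\<close>

definition simple_graph :: "'a set \<Rightarrow> ('a \<Rightarrow> 'a \<Rightarrow> bool) \<Rightarrow> bool" where
  "simple_graph V E \<longleftrightarrow> finite V \<and> (\<forall>x y. E x y \<longrightarrow> E y x) \<and> (\<forall>x. \<not> E x x)"

definition walk_in :: "'a set \<Rightarrow> ('a \<Rightarrow> 'a \<Rightarrow> bool) \<Rightarrow> 'a list \<Rightarrow> bool" where
  "walk_in U E p \<longleftrightarrow> p \<noteq> [] \<and> set p \<subseteq> U \<and> (\<forall>i. Suc i < length p \<longrightarrow> E (p ! i) (p ! Suc i))"

definition connected_on :: "'a set \<Rightarrow> ('a \<Rightarrow> 'a \<Rightarrow> bool) \<Rightarrow> bool" where
  "connected_on U E \<longleftrightarrow> U \<noteq> {} \<and>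
     (\<forall>x\<in>U. \<forall>y\<in>U. \<exists>p. walk_in U E p \<and> hd p = x \<and> last p = y)"

definition dominating_set :: "'a set \<Rightarrow> ('a \<Rightarrow> 'a \<Rightarrow> bool) \<Rightarrow> 'a set \<Rightarrow> bool" where
  "dominating_set V E S \<longleftrightarrow> S \<subseteq> V \<and> (\<forall>x\<in>V - S. \<exists>y\<in>S. E x y)"

definition connected_dominating_set :: "'a set \<Rightarrow> ('a \<Rightarrow> 'a \<Rightarrow> bool) \<Rightarrow> 'a set \<Rightarrow> bool" where
  "connected_dominating_set V E S \<longleftrightarrow> dominating_set V E S \<and> connected_on S E"

text \<open>Connected-domishold (disconnected graphs are connected-domishold by convention).\<close>
definition connected_domishold :: "'a set \<Rightarrow> ('a \<Rightarrow> 'a \<Rightarrow> bool) \<Rightarrow> bool" where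
  "connected_domishold V E \<longleftrightarrow>
     (connected_on V E \<longrightarrow>
       (\<exists>(w :: 'a \<Rightarrow> real) (t :: real). (\<forall>x\<in>V. w x \<ge> 0) \<and> t \<ge> 0 \<and>
          (\<forall>S. S \<subseteq> V \<longrightarrow> ((\<Sum>x\<in>S. w x) \<ge> t \<longleftrightarrow> connected_dominating_set V E S))))"

definition hereditarily_connected_domishold :: "'a set \<Rightarrow> ('a \<Rightarrow> 'a \<Rightarrow> bool) \<Rightarrow> bool" where
  "hereditarily_connected_domishold V E \<longleftrightarrow> (\<forall>U. U \<subseteq> V \<longrightarrow> connected_domishold U E)"

definition induced_cycle :: "'a set \<Rightarrow> ('a \<Rightarrow> 'a \<Rightarrow> bool) \<Rightarrow> 'a list \<Rightarrow> bool" where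
  "induced_cycle V E c \<longleftrightarrow> length c \<ge> 4 \<and> distinct c \<and> set c \<subseteq> V \<and>
     (\<forall>i<length c. \<forall>j<length c.
        E (c ! i) (c ! j) \<longleftrightarrow> (j = (i + 1) mod length c \<or> i = (j + 1) mod length c))"

definition chordal :: "'a set \<Rightarrow> ('a \<Rightarrow> 'a \<Rightarrow> bool) \<Rightarrow> bool" where
  "chordal V E \<longleftrightarrow> (\<nexists>c. induced_cycle V E c)"

text \<open>Kite: diamond on u,v (degree 3) and x,y (degree 2), plus z adjacent only to x.\<close>
definition induced_kite :: "('a \<Rightarrow> 'a \<Rightarrow> bool) \<Rightarrow> 'a \<Rightarrow> 'a \<Rightarrow> 'a \<Rightarrow> 'a \<Rightarrow> 'a \<Rightarrow> bool" where
  "induced_kite E u v x y z \<longleftrightarrow> distinct [u, v, x, y, z] \<and>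
     E u v \<and> E u x \<and> E u y \<and> E v x \<and> E v y \<and> \<not> E x y \<and>
     E z x \<and> \<not> E z y \<and> \<not> E z u \<and> \<not> E z v"

definition kite_free :: "'a set \<Rightarrow> ('a \<Rightarrow> 'a \<Rightarrow> bool) \<Rightarrow> bool" where
  "kite_free V E \<longleftrightarrow> (\<forall>u\<in>V. \<forall>v\<in>V. \<forall>x\<in>V. \<forall>y\<in>V. \<forall>z\<in>V. \<not> induced_kite E u v x y z)"

end

theory Submission
  imports Defs
begin

lemma walk_single[simp]: "walk_in U E [x] \<longleftrightarrow> x \<in> U"
  by (simp add: walk_in_def)

lemma walk_Cons2: "walk_in U E (x # y # xs) \<longleftrightarrow> x \<in> U \<and> E x y \<and> walk_in U E (y # xs)"
proof
  assume h: "walk_in U E (x # y # xs)"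
  have "\<forall>i. Suc i < length (y # xs) \<longrightarrow> E ((y#xs) ! i) ((y#xs) ! Suc i)"
  proof (intro allI impI)
    fix i assume "Suc i < length (y # xs)"
    then have "Suc (Suc i) < length (x # y # xs)" by simp
    with h have "E ((x#y#xs) ! Suc i) ((x#y#xs) ! Suc (Suc i))" unfolding walk_in_def by blast
    then show "E ((y#xs) ! i) ((y#xs) ! Suc i)" by simp
  qed
  moreover have "E x y" using h unfolding walk_in_def by (metis length_Cons nth_Cons_0 nth_Cons_Suc zero_less_Suc Suc_less_eq)
  ultimately show "x \<in> U \<and> E x y \<and> walk_in U E (y # xs)" using h unfolding walk_in_def by auto
next
  assume h: "x \<in> U \<and> E x y \<and> walk_in U E (y # xs)"
  show "walk_in U E (x # y # xs)" unfolding walk_in_def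
  proof (intro conjI allI impI)
    show "set (x # y # xs) \<subseteq> U" using h unfolding walk_in_def by auto
  next
    fix i assume i: "Suc i < length (x # y # xs)"
    show "E ((x # y # xs) ! i) ((x # y # xs) ! Suc i)"
    proof (cases i)
      case 0 then show ?thesis using h by simp
    next
      case (Suc k) then show ?thesis using h i unfolding walk_in_def by auto
    qed
  qed simp
qed

lemma walk_Nil[simp]: "\<not> walk_in U E []" by (simp add: walk_in_def)

lemma walk_nonempty: "walk_in U E p \<Longrightarrow> p \<noteq> []" by (simp add: walk_in_def)

lemma walk_set: "walk_in U E p \<Longrightarrow> set p \<subseteq> U" by (simp add: walk_in_def)

lemma walk_mono: "walk_in U E p \<Longrightarrow> U \<subseteq> W \<Longrightarrow> walk_in W E p"
  by (auto simp: walk_in_def)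

lemma walk_restrict: "walk_in U E p \<Longrightarrow> set p \<subseteq> W \<Longrightarrow> walk_in W E p"
  by (auto simp: walk_in_def)

lemma walk_edge: "walk_in U E p \<Longrightarrow> Suc i < length p \<Longrightarrow> E (p!i) (p!Suc i)"
  by (simp add: walk_in_def)

lemma walk_take: "walk_in U E p \<Longrightarrow> 0 < n \<Longrightarrow> walk_in U E (take n p)"
  unfolding walk_in_def by (auto dest: in_set_takeD)

lemma walk_drop: "walk_in U E p \<Longrightarrow> n < length p \<Longrightarrow> walk_in U E (drop n p)"
  unfolding walk_in_def by (auto dest: in_set_dropD simp: add.commute)

lemma walk_append:
  assumes "walk_in U E p" "walk_in U E q" "E (last p) (hd q)"
  shows "walk_in U E (p @ q)"
  using assms
proof (induction p rule: induct_list012)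
  case 1 then show ?case by (simp add: walk_in_def)
next
  case (2 x) then show ?case
    by (cases q) (auto simp: walk_Cons2)
next
  case (3 x y zs) then show ?case by (auto simp: walk_Cons2)
qed

lemma walk_hd_in: "walk_in U E p \<Longrightarrow> hd p \<in> U"
  by (auto simp: walk_in_def)
lemma walk_last_in: "walk_in U E p \<Longrightarrow> last p \<in> U"
  by (auto simp: walk_in_def)

lemma walk_nth_in: "walk_in U E p \<Longrightarrow> i < length p \<Longrightarrow> p ! i \<in> U"
  by (auto simp: walk_in_def)

lemma hd_take_Suc: "p \<noteq> [] \<Longrightarrow> hd (take (Suc i) p) = hd p"
  by (cases p) auto
lemma last_take_Suc: "i < length p \<Longrightarrow> last (take (Suc i) p) = p ! i"
  by (subst last_conv_nth) auto
lemma hd_drop: "j < length p \<Longrightarrow> hd (drop j p) = p ! j"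
  by (simp add: hd_drop_conv_nth)
lemma last_drop': "j < length p \<Longrightarrow> last (drop j p) = last p"
  by simp


locale sgraph =
  fixes E :: "'a \<Rightarrow> 'a \<Rightarrow> bool"
  assumes sym: "E x y \<Longrightarrow> E y x" and irr: "\<not> E x x"
begin

lemma walk_rev: "walk_in U E p \<Longrightarrow> walk_in U E (rev p)"
  unfolding walk_in_def
proof (intro conjI allI impI)
  fix i assume h: "p \<noteq> [] \<and> set p \<subseteq> U \<and> (\<forall>i. Suc i < length p \<longrightarrow> E (p ! i) (p ! Suc i))"
    and i: "Suc i < length (rev p)"
  let ?n = "length p"
  have "E (p ! (?n - Suc (Suc i))) (p ! Suc (?n - Suc (Suc i)))" using h i by auto
  moreover have "Suc (?n - Suc (Suc i)) = ?n - Suc i" using i by simp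
  ultimately show "E (rev p ! i) (rev p ! Suc i)" using i by (simp add: rev_nth sym)
qed auto

definition reach :: "'a set \<Rightarrow> 'a \<Rightarrow> 'a \<Rightarrow> bool" where
  "reach U a b \<longleftrightarrow> (\<exists>p. walk_in U E p \<and> hd p = a \<and> last p = b)"

lemma reach_refl: "a \<in> U \<Longrightarrow> reach U a a"
  unfolding reach_def by (rule exI[of _ "[a]"]) simp

lemma reach_sym: "reach U a b \<Longrightarrow> reach U b a"
  unfolding reach_def by (metis walk_rev hd_rev last_rev)

lemma reach_edge: "a \<in> U \<Longrightarrow> b \<in> U \<Longrightarrow> E a b \<Longrightarrow> reach U a b"
  unfolding reach_def by (rule exI[of _ "[a,b]"]) (simp add: walk_Cons2)

lemma reach_trans: assumes "reach U a b" "reach U b c" shows "reach U a c"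
proof -
  obtain p where p: "walk_in U E p" "hd p = a" "last p = b" using assms(1) reach_def by auto
  obtain q where q: "walk_in U E q" "hd q = b" "last q = c" using assms(2) reach_def by auto
  show ?thesis
  proof (cases "tl q = []")
    case True
    then have "q = [b]" using q walk_nonempty by (metis hd_Cons_tl)
    then show ?thesis using p q reach_def by auto
  next
    case False
    have "q = b # tl q" using q walk_nonempty by (metis hd_Cons_tl)
    then have wq: "walk_in U E (tl q)" and e: "E b (hd (tl q))" using q(1) False
      by (metis hd_Cons_tl walk_Cons2)+
    have "walk_in U E (p @ tl q)" using walk_append[OF p(1) wq] e p by simp
    moreover have "hd (p @ tl q) = a" using p walk_nonempty[OF p(1)] by simp
    moreover have "last (p @ tl q) = c" using False q \<open>q = b # tl q\<close> by (metis last_ConsR last_appendR)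
    ultimately show ?thesis unfolding reach_def by blast
  qed
qed

lemma reach_in: "reach U a b \<Longrightarrow> a \<in> U \<and> b \<in> U"
  unfolding reach_def using walk_hd_in walk_last_in by blast

lemma reach_mono: "reach U a b \<Longrightarrow> U \<subseteq> W \<Longrightarrow> reach W a b"
  unfolding reach_def using walk_mono by blast

lemma walk_reach: assumes "walk_in U E p" "i < length p" shows "reach U (hd p) (p ! i)"
  unfolding reach_def
  apply (rule exI[of _ "take (Suc i) p"])
  using assms walk_take hd_take_Suc last_take_Suc walk_nonempty by auto

lemma reach_restrict:
  assumes "reach U a b" "\<And>x. reach U a x \<Longrightarrow> x \<in> W"
  shows "reach W a b"
proof -
  obtain p where p: "walk_in U E p" "hd p = a" "last p = b" using assms(1) reach_def by auto
  have "set p \<subseteq> W"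
  proof
    fix x assume "x \<in> set p"
    then obtain i where "i < length p" "x = p ! i" by (metis in_set_conv_nth)
    then show "x \<in> W" using walk_reach[OF p(1)] p(2) assms(2) by blast
  qed
  then show ?thesis using p walk_restrict reach_def by blast
qed

lemma crossing:
  assumes "walk_in U E p" "hd p \<in> A" "last p \<notin> A"
  shows "\<exists>i. Suc i < length p \<and> p ! i \<in> A \<and> p ! Suc i \<notin> A"
  using assms
proof (induction p rule: induct_list012)
  case 1 then show ?case by simp
next
  case (2 x) then show ?case by simp
next
  case (3 x y zs)
  show ?case
  proof (cases "y \<in> A")
    case True
    have "walk_in U E (y # zs)" using 3(3) walk_Cons2 by metis
    then obtain i where "Suc i < length (y # zs)" "(y#zs) ! i \<in> A" "(y#zs) ! Suc i \<notin> A"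
      using 3(2)[of] True 3(5) by auto
    then show ?thesis by (intro exI[of _ "Suc i"]) auto
  next
    case False then show ?thesis using 3(4) by (intro exI[of _ 0]) auto
  qed
qed

end
context sgraph begin

lemma min_walk:
  assumes "walk_in U E p" "P (hd p)" "Q (last p)"
  shows "\<exists>q. walk_in U E q \<and> P (hd q) \<and> Q (last q) \<and> distinct q \<and>
    (\<forall>i j. Suc i < j \<and> j < length q \<longrightarrow> \<not> E (q!i) (q!j)) \<and>
    (\<forall>i. 0 < i \<and> i < length q \<longrightarrow> \<not> P (q!i)) \<and>
    (\<forall>i. i < length q - 1 \<longrightarrow> \<not> Q (q!i))"
proof -
  let ?G = "\<lambda>q. walk_in U E q \<and> P (hd q) \<and> Q (last q)"
  obtain q where q: "?G q" and qmin: "\<And>q'. ?G q' \<Longrightarrow> length q \<le> length q'"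
    using ex_has_least_nat[of ?G p length] assms by blast
  have wq: "walk_in U E q" and ne: "q \<noteq> []" using q walk_nonempty by auto
  have dist: "distinct q"
  proof (rule ccontr)
    assume "\<not> distinct q"
    then obtain i j where ij: "i < j" "j < length q" "q ! i = q ! j"
      by (metis distinct_conv_nth linorder_neqE_nat)
    show False
    proof (cases "Suc j = length q")
      case True
      let ?q = "take (Suc i) q"
      have jj: "length q - Suc 0 = j" using True by simp
      have "?G ?q" using q walk_take[OF wq] hd_take_Suc[OF ne] last_take_Suc[of i q] ij True
        by (simp add: last_conv_nth ne jj)
      then show False using qmin[of ?q] ij by simp
    next
      case False
      let ?q = "take (Suc i) q @ drop (Suc j) q"
      have j1: "Suc j < length q" using False ij by simp
      have "walk_in U E ?q"
        apply (rule walk_append)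
        using walk_take[OF wq] walk_drop[OF wq j1] last_take_Suc[of i q] hd_drop[OF j1] ij walk_edge[OF wq j1]
        by auto
      moreover have "hd ?q = hd q" using hd_take_Suc[OF ne] ne by (cases q) auto
      moreover have "last ?q = last q" using j1 by simp
      ultimately have "?G ?q" using q by simp
      then show False using qmin[of ?q] ij j1 by simp
    qed
  qed
  have ind: "\<forall>i j. Suc i < j \<and> j < length q \<longrightarrow> \<not> E (q!i) (q!j)"
  proof (intro allI impI notI)
    fix i j assume ij: "Suc i < j \<and> j < length q" and e: "E (q!i) (q!j)"
    let ?q = "take (Suc i) q @ drop j q"
    have "walk_in U E ?q"
      apply (rule walk_append)
      using walk_take[OF wq] walk_drop[OF wq] last_take_Suc[of i q] hd_drop[of j q] ij e
      by auto
    moreover have "hd ?q = hd q" using hd_take_Suc[OF ne] ne by (cases q) auto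
    moreover have "last ?q = last q" using ij by simp
    ultimately have "?G ?q" using q by simp
    then have "length q \<le> length ?q" by (rule qmin)
    moreover have "length ?q < length q" using ij by auto
    ultimately show False by simp
  qed
  have pmin: "\<forall>i. 0 < i \<and> i < length q \<longrightarrow> \<not> P (q!i)"
  proof (intro allI impI notI)
    fix i assume i: "0 < i \<and> i < length q" and pi: "P (q!i)"
    let ?q = "drop i q"
    have "?G ?q" using walk_drop[OF wq] hd_drop[of i q] i pi q by simp
    then have "length q \<le> length ?q" by (rule qmin)
    moreover have "length ?q = length q - i" by simp
    moreover have "length q - i < length q" using i by linarith
    ultimately show False by linarith
  qed
  have qmin': "\<forall>i. i < length q - 1 \<longrightarrow> \<not> Q (q!i)"
  proof (intro allI impI notI)
    fix i assume i: "i < length q - 1" and qi: "Q (q!i)"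
    let ?q = "take (Suc i) q"
    have "?G ?q" using walk_take[OF wq] hd_take_Suc[OF ne] last_take_Suc[of i q] i qi q by simp
    then have "length q \<le> length ?q" by (rule qmin)
    moreover have "length ?q = Suc i" using i by simp
    ultimately show False using i by linarith
  qed
  show ?thesis using q dist ind pmin qmin' by blast
qed

lemma cycle_from_path:
  assumes w: "walk_in V E p" and d: "distinct p"
    and ind: "\<forall>i j. Suc i < j \<and> j < length p \<longrightarrow> \<not> E (p!i) (p!j)"
    and len: "length p \<ge> 3" and u: "u \<in> V" "u \<notin> set p"
    and eh: "E u (hd p)" and el: "E u (last p)"
    and ni: "\<forall>i. 0 < i \<and> i < length p - 1 \<longrightarrow> \<not> E u (p!i)"
  shows "induced_cycle V E (u # p)"
  unfolding induced_cycle_def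
proof (intro conjI allI impI)
  show "4 \<le> length (u # p)" using len by simp
  show "distinct (u # p)" using d u by simp
  show "set (u # p) \<subseteq> V" using w u walk_set by auto
next
  fix i j assume i: "i < length (u # p)" and j: "j < length (u # p)"
  let ?n = "length (u # p)"
  have hd0: "hd p = p ! 0" and last0: "last p = p ! (length p - 1)"
  proof -
    have ne: "p \<noteq> []" using len by auto
    show "hd p = p ! 0" "last p = p ! (length p - 1)" by (simp_all add: hd_conv_nth last_conv_nth ne)
  qed
  have modS: "\<And>k. k < ?n \<Longrightarrow> (k + 1) mod ?n = (if k + 1 = ?n then 0 else k + 1)"
  proof -
    fix k assume "k < ?n"
    then consider "k + 1 < ?n" | "k + 1 = ?n" by linarith
    then show "(k + 1) mod ?n = (if k + 1 = ?n then 0 else k + 1)"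
      by cases (simp_all only: mod_less mod_self, simp_all)
  qed
  have mi: "(i + 1) mod ?n = (if i + 1 = ?n then 0 else i + 1)" using i by (rule modS)
  have mj: "(j + 1) mod ?n = (if j + 1 = ?n then 0 else j + 1)" using j by (rule modS)
  have "E ((u # p) ! i) ((u # p) ! j) = (j = (if i + 1 = ?n then 0 else i + 1) \<or> i = (if j + 1 = ?n then 0 else j + 1))"
  proof (cases i)
    case 0
    then show ?thesis
    proof (cases j)
      case 0 then show ?thesis using \<open>i = 0\<close> irr len by (cases p) simp_all
    next
      case (Suc j')
      have j': "j' < length p" using j Suc by simp
      have "E u (p ! j') \<longleftrightarrow> j' = 0 \<or> j' = length p - 1"
      proof (cases "j' = 0 \<or> j' = length p - 1")
        case True then show ?thesis using eh el hd0 last0 by auto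
      next
        case False then show ?thesis using ni j' by auto
      qed
      moreover have "(0::nat) + 1 \<noteq> ?n" using len by (cases p) simp_all
      moreover have "(Suc j' + 1 = ?n) \<longleftrightarrow> j' = length p - 1" using j' len by simp linarith
      ultimately show ?thesis using \<open>i = 0\<close> Suc by simp
    qed
  next
    case (Suc i')
    then show ?thesis
    proof (cases j)
      case 0
      have i': "i' < length p" using i \<open>i = Suc i'\<close> by simp
      have sy: "E (p ! i') u = E u (p ! i')" using sym by blast
      have "E u (p ! i') \<longleftrightarrow> i' = 0 \<or> i' = length p - 1"
      proof (cases "i' = 0 \<or> i' = length p - 1")
        case True then show ?thesis using eh el hd0 last0 by auto
      next
        case False then show ?thesis using ni i' by auto
      qed
      then have "E (p ! i') u \<longleftrightarrow> i' = 0 \<or> i' = length p - 1" using sy by simp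
      moreover have "(0::nat) + 1 \<noteq> ?n" using len by (cases p) simp_all
      moreover have "(Suc i' + 1 = ?n) \<longleftrightarrow> i' = length p - 1" using i' len by simp linarith
      ultimately show ?thesis using \<open>i = Suc i'\<close> 0 by auto
    next
      case (Suc j')
      have i': "i' < length p" and j': "j' < length p" using i j \<open>i = Suc i'\<close> Suc by auto
      have "E (p ! i') (p ! j') \<longleftrightarrow> j' = Suc i' \<or> i' = Suc j'"
      proof
        assume e: "E (p ! i') (p ! j')"
        show "j' = Suc i' \<or> i' = Suc j'"
        proof (rule ccontr)
          assume nn: "\<not> (j' = Suc i' \<or> i' = Suc j')"
          consider "i' = j'" | "Suc i' < j'" | "Suc j' < i'" using nn by linarith
          then show False
          proof cases
            case 1 then show ?thesis using e irr by simp
          next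
            case 2 then show ?thesis using ind e j' by blast
          next
            case 3 then show ?thesis using ind sym[OF e] i' by blast
          qed
        qed
      next
        assume "j' = Suc i' \<or> i' = Suc j'"
        then show "E (p ! i') (p ! j')"
        proof
          assume "j' = Suc i'" then show ?thesis using walk_edge[OF w] j' by simp
        next
          assume "i' = Suc j'" then show ?thesis using sym[OF walk_edge[OF w, of j']] i' by simp
        qed
      qed
      note ee = this
      have a1: "(Suc j' = (if Suc i' + 1 = ?n then 0 else Suc i' + 1)) = (j' = Suc i')" using j' by simp
      have a2: "(Suc i' = (if Suc j' + 1 = ?n then 0 else Suc j' + 1)) = (i' = Suc j')" using i' by simp
      show ?thesis unfolding \<open>i = Suc i'\<close> Suc by (simp only: nth_Cons_Suc ee a1 a2)
    qed
  qed
  then show "E ((u # p) ! i) ((u # p) ! j) = (j = (i + 1) mod ?n \<or> i = (j + 1) mod ?n)"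
    by (simp only: mi mj)
qed

end
context sgraph begin

definition cut :: "'a set \<Rightarrow> 'a set \<Rightarrow> bool" where
  "cut V X \<longleftrightarrow> X \<subseteq> V \<and> (\<exists>a\<in>V - X. \<exists>b\<in>V - X. \<not> reach (V - X) a b)"

definition mincut :: "'a set \<Rightarrow> 'a set \<Rightarrow> bool" where
  "mincut V X \<longleftrightarrow> cut V X \<and> (\<forall>Y. Y \<subset> X \<longrightarrow> \<not> cut V Y)"

lemma cut_other:
  assumes "cut V X" "a \<in> V - X"
  obtains b where "b \<in> V - X" "\<not> reach (V - X) a b"
proof -
  obtain a0 b0 where ab: "a0 \<in> V - X" "b0 \<in> V - X" "\<not> reach (V - X) a0 b0"
    using assms(1) cut_def by auto
  show ?thesis
  proof (cases "reach (V - X) a a0")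
    case True
    then have "\<not> reach (V - X) a b0" using ab reach_sym reach_trans by blast
    then show ?thesis using that ab by blast
  next
    case False then show ?thesis using that ab by blast
  qed
qed

lemma full_comp:
  assumes mc: "mincut V X" and v: "v \<in> X" and a: "a \<in> V - X"
  shows "\<exists>n. E v n \<and> reach (V - X) a n"
proof -
  have XV: "X \<subseteq> V" using mc mincut_def cut_def by auto
  have "cut V X" using mc by (simp add: mincut_def)
  then obtain b where b: "b \<in> V - X" "\<not> reach (V - X) a b"
    using cut_other[OF _ a] by blast
  have "X - {v} \<subset> X" using v by auto
  then have nc: "\<not> cut V (X - {v})" using mc mincut_def by auto
  have "a \<in> V - (X - {v})" "b \<in> V - (X - {v})" using a b by auto
  then have "reach (V - (X - {v})) a b" using nc XV unfolding cut_def by auto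
  then obtain p where p: "walk_in (V - (X - {v})) E p" "hd p = a" "last p = b"
    using reach_def by auto
  let ?A = "{x. reach (V - X) a x}"
  have "hd p \<in> ?A" using p(2) a reach_refl by auto
  moreover have "last p \<notin> ?A" using p(3) b by auto
  ultimately obtain i where i: "Suc i < length p" "p ! i \<in> ?A" "p ! Suc i \<notin> ?A"
    using crossing[OF p(1)] by blast
  have e: "E (p ! i) (p ! Suc i)" using walk_edge[OF p(1) i(1)] .
  have inU: "p ! Suc i \<in> V - (X - {v})" using walk_nth_in[OF p(1) i(1)] .
  have "p ! Suc i = v"
  proof (rule ccontr)
    assume "p ! Suc i \<noteq> v"
    then have "p ! Suc i \<in> V - X" using inU by auto
    moreover have "p ! i \<in> V - X" using i(2) reach_in by auto
    ultimately have "reach (V - X) (p ! i) (p ! Suc i)" using reach_edge[OF _ _ e] by blast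
    then have "p ! Suc i \<in> ?A" using reach_trans[of "V - X" a "p ! i" "p ! Suc i"] i(2) by simp
    then show False using i(3) by simp
  qed
  then show ?thesis using sym[OF e] i(2) by auto
qed

lemma common_nbr:
  assumes ch: "chordal V E" and AV: "A \<subseteq> V" and uv: "u \<in> V" "v \<in> V" "u \<notin> A" "v \<notin> A" "u \<noteq> v"
    and e: "E u v" and p: "walk_in (A \<union> {v}) E p" "hd p \<in> A" "E u (hd p)" "last p = v"
  shows "\<exists>m\<in>A. E u m \<and> E m v"
proof -
  obtain q where q: "walk_in (A \<union> {v}) E q" "hd q \<in> A \<and> E u (hd q)" "last q = v" "distinct q"
    "\<forall>i j. Suc i < j \<and> j < length q \<longrightarrow> \<not> E (q!i) (q!j)"
    "\<forall>i. 0 < i \<and> i < length q \<longrightarrow> \<not> (q!i \<in> A \<and> E u (q!i))"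
    "\<forall>i. i < length q - 1 \<longrightarrow> \<not> (q!i = v)"
    using min_walk[OF p(1), of "\<lambda>h. h \<in> A \<and> E u h" "\<lambda>l. l = v"] p by auto
  have ne: "q \<noteq> []" using q(1) walk_nonempty by auto
  have inA: "\<And>i. i < length q - 1 \<Longrightarrow> q ! i \<in> A"
  proof -
    fix i assume "i < length q - 1"
    then show "q ! i \<in> A" using q(7) walk_nth_in[OF q(1), of i] by auto
  qed
  have hd0: "hd q = q ! 0" and last0: "last q = q ! (length q - 1)"
    using ne by (simp_all add: hd_conv_nth last_conv_nth)
  have len2: "length q \<ge> 2"
  proof (rule ccontr)
    assume "\<not> length q \<ge> 2"
    moreover have "length q \<noteq> 0" using ne by simp
    ultimately have "length q = 1" by linarith
    then have "hd q = last q" using hd0 last0 by simp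
    then show False using q(2) q(3) uv by auto
  qed
  show ?thesis
  proof (cases "length q = 2")
    case True
    have "E (q ! 0) (q ! Suc 0)" using walk_edge[OF q(1), of 0] True by simp
    moreover have "q ! Suc 0 = v" using q(3) last0 True by simp
    ultimately show ?thesis using q(2) hd0 by auto
  next
    case False
    then have len3: "length q \<ge> 3" using len2 by simp
    have wV: "walk_in V E q" using walk_mono[OF q(1)] AV uv by auto
    have "u \<notin> set q" using walk_set[OF q(1)] uv by auto
    moreover have "\<forall>i. 0 < i \<and> i < length q - 1 \<longrightarrow> \<not> E u (q!i)" using q(6) inA by auto
    ultimately have "induced_cycle V E (u # q)"
      using cycle_from_path[OF wV q(4) q(5) len3 uv(1)] q(2) q(3) e by blast
    then show ?thesis using ch chordal_def by blast
  qed
qed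

lemma mincut_clique:
  assumes ch: "chordal V E" and mc: "mincut V X" and uv: "u \<in> X" "v \<in> X" "u \<noteq> v"
  shows "E u v"
proof (rule ccontr)
  assume nuv: "\<not> E u v"
  have XV: "X \<subseteq> V" using mc mincut_def cut_def by auto
  obtain a0 b0 where ab: "a0 \<in> V - X" "b0 \<in> V - X" "\<not> reach (V - X) a0 b0"
    using mc mincut_def cut_def by auto
  define A where "A = {x. reach (V - X) a0 x}"
  define B where "B = {x. reach (V - X) b0 x}"
  have AV: "A \<subseteq> V - X" and BV: "B \<subseteq> V - X" using reach_in A_def B_def by auto
  have disj: "\<And>x y. x \<in> A \<Longrightarrow> y \<in> B \<Longrightarrow> x \<noteq> y \<and> \<not> E x y"
  proof -
    fix x y assume x: "x \<in> A" and y: "y \<in> B"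
    show "x \<noteq> y \<and> \<not> E x y"
    proof (intro conjI notI)
      assume "x = y"
      have "reach (V - X) a0 x" "reach (V - X) b0 y" using x y A_def B_def by auto
      then have "reach (V - X) a0 b0" using \<open>x = y\<close> reach_sym reach_trans by metis
      then show False using ab(3) by simp
    next
      assume "E x y"
      then have xy: "reach (V - X) x y" using reach_edge[OF _ _ \<open>E x y\<close>] x y AV BV by blast
      have "reach (V - X) a0 x" "reach (V - X) b0 y" using x y A_def B_def by auto
      then have "reach (V - X) a0 b0" using xy reach_sym reach_trans by metis
      then show False using ab(3) by simp
    qed
  qed
  obtain nua where nua: "E u nua" "reach (V - X) a0 nua" using full_comp[OF mc uv(1) ab(1)] by blast
  obtain nub where nub: "E u nub" "reach (V - X) b0 nub" using full_comp[OF mc uv(1) ab(2)] by blast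
  obtain nva where nva: "E v nva" "reach (V - X) a0 nva" using full_comp[OF mc uv(2) ab(1)] by blast
  obtain nvb where nvb: "E v nvb" "reach (V - X) b0 nvb" using full_comp[OF mc uv(2) ab(2)] by blast
  have "reach A nua nva"
    apply (rule reach_restrict[of "V - X"])
    using nua nva reach_sym reach_trans apply blast
    using nua reach_trans A_def by blast
  then obtain p1 where p1: "walk_in A E p1" "hd p1 = nua" "last p1 = nva" using reach_def by auto
  have "reach B nvb nub"
    apply (rule reach_restrict[of "V - X"])
    using nub nvb reach_sym reach_trans apply blast
    using nvb reach_trans B_def by blast
  then obtain p2 where p2: "walk_in B E p2" "hd p2 = nvb" "last p2 = nub" using reach_def by auto
  let ?W = "A \<union> B \<union> {v}"
  have w1: "walk_in ?W E p1" using walk_mono[OF p1(1), of ?W] by auto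
  have w2: "walk_in ?W E p2" using walk_mono[OF p2(1), of ?W] by auto
  have wv: "walk_in ?W E [v]" by simp
  have "walk_in ?W E ([v] @ p2)" using walk_append[OF wv w2] p2(2) nvb by simp
  moreover have "E (last p1) (hd ([v] @ p2))" using p1(3) sym[OF nva(1)] by simp
  ultimately have wp: "walk_in ?W E (p1 @ [v] @ p2)" using walk_append[OF w1] by blast
  have hp: "hd (p1 @ [v] @ p2) = nua" using p1 walk_nonempty by (cases p1) auto
  have lp: "last (p1 @ [v] @ p2) = nub" using p2 walk_nonempty by (cases p2 rule: rev_cases) auto
  have nuaA: "nua \<in> A" and nubB: "nub \<in> B" using nua nub A_def B_def by auto
  obtain q where q: "walk_in ?W E q" "hd q \<in> A \<and> E u (hd q)" "last q \<in> B \<and> E u (last q)" "distinct q"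
    "\<forall>i j. Suc i < j \<and> j < length q \<longrightarrow> \<not> E (q!i) (q!j)"
    "\<forall>i. 0 < i \<and> i < length q \<longrightarrow> \<not> (q!i \<in> A \<and> E u (q!i))"
    "\<forall>i. i < length q - 1 \<longrightarrow> \<not> (q!i \<in> B \<and> E u (q!i))"
    using min_walk[OF wp, of "\<lambda>h. h \<in> A \<and> E u h" "\<lambda>l. l \<in> B \<and> E u l"] hp lp nuaA nubB nua nub by auto
  have ne: "q \<noteq> []" using q(1) walk_nonempty by auto
  have hd0: "hd q = q ! 0" and last0: "last q = q ! (length q - 1)"
    using ne by (simp_all add: hd_conv_nth last_conv_nth)
  have len3: "length q \<ge> 3"
  proof (rule ccontr)
    assume "\<not> length q \<ge> 3"
    moreover have "length q \<noteq> 0" using ne by simp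
    ultimately consider "length q = 1" | "length q = 2" by linarith
    then show False
    proof cases
      case 1
      then have "hd q = last q" using hd0 last0 by simp
      then show False using q(2) q(3) disj by blast
    next
      case 2
      have "E (q ! 0) (q ! Suc 0)" using walk_edge[OF q(1), of 0] 2 by simp
      then have "E (hd q) (last q)" using hd0 last0 2 by simp
      then show False using q(2) q(3) disj by blast
    qed
  qed
  have WV: "?W \<subseteq> V" using AV BV XV uv by auto
  have wV: "walk_in V E q" using walk_mono[OF q(1) WV] .
  have uV: "u \<in> V" using XV uv by auto
  have "u \<notin> ?W" using AV BV uv by auto
  then have "u \<notin> set q" using walk_set[OF q(1)] by auto
  moreover have "\<forall>i. 0 < i \<and> i < length q - 1 \<longrightarrow> \<not> E u (q!i)"
  proof (intro allI impI notI)
    fix i assume i: "0 < i \<and> i < length q - 1" and e: "E u (q ! i)"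
    have "i < length q" using i by linarith
    then have "q ! i \<in> ?W" using walk_nth_in[OF q(1)] by blast
    then show False using q(6) q(7) i e nuv by auto
  qed
  ultimately have "induced_cycle V E (u # q)"
    using cycle_from_path[OF wV q(4) q(5) len3 uV] q(2) q(3) by blast
  then show False using ch chordal_def by blast
qed

end
context sgraph begin

lemma ind3:
  assumes "\<not> E a c"
  shows "\<forall>i j. Suc i < j \<and> j < length [a, b, c] \<longrightarrow> \<not> E ([a, b, c] ! i) ([a, b, c] ! j)"
proof (intro allI impI)
  fix i j assume h: "Suc i < j \<and> j < length [a, b, c]"
  then have "i = 0" "j = 2" by auto
  then show "\<not> E ([a, b, c] ! i) ([a, b, c] ! j)" using assms by simp
qed

lemma kite_aux:
  assumes ch: "chordal V E" and kf: "kite_free V E"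
    and w: "walk_in V E z" and d: "distinct z"
    and ind: "\<forall>i j. Suc i < j \<and> j < length z \<longrightarrow> \<not> E (z!i) (z!j)"
    and d12: "E d1 d2" "d1 \<noteq> d2" and m: "E m d1" "E m d2" "m \<noteq> d1" "m \<noteq> d2"
    and mz: "\<forall>i<length z. \<not> E m (z!i)"
    and notin: "d1 \<notin> set z" "d2 \<notin> set z" "m \<notin> set z"
    and inV: "d1 \<in> V" "d2 \<in> V" "m \<in> V"
    and f1: "0 < f1" "f1 < length z" "\<forall>i<f1. E d1 (z!i)" "\<not> E d1 (z!f1)"
    and f2: "0 < f2" "f2 < length z" "\<forall>i<f2. E d2 (z!i)" "\<not> E d2 (z!f2)"
    and le: "f2 \<le> f1"
  shows False
proof -
  have zV: "\<And>i. i < length z \<Longrightarrow> z ! i \<in> V" using walk_nth_in[OF w] by blast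
  have zE: "\<And>i. Suc i < length z \<Longrightarrow> E (z!i) (z!Suc i) \<and> E (z!Suc i) (z!i)"
  proof -
    fix i assume "Suc i < length z"
    then have e: "E (z!i) (z!Suc i)" by (rule walk_edge[OF w])
    then show "E (z!i) (z!Suc i) \<and> E (z!Suc i) (z!i)" using sym[OF e] by simp
  qed
  have zne: "\<And>i j. i < length z \<Longrightarrow> j < length z \<Longrightarrow> i \<noteq> j \<Longrightarrow> z!i \<noteq> z!j"
    using d by (simp add: nth_eq_iff_index_eq)
  have nin: "\<And>x i. x \<notin> set z \<Longrightarrow> i < length z \<Longrightarrow> x \<noteq> z!i"
    using nth_mem by blast
  have nokite: "\<And>u v x y zz. u \<in> V \<Longrightarrow> v \<in> V \<Longrightarrow> x \<in> V \<Longrightarrow> y \<in> V \<Longrightarrow> zz \<in> V \<Longrightarrow> \<not> induced_kite E u v x y zz"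
    using kf[unfolded kite_free_def] by blast
  have symE: "\<And>x y. E x y = E y x" by (rule iffI) (erule sym)+
  consider "f1 \<ge> 3" | "f1 = 2" "f2 = 2" | "f1 = 2" "f2 = 1" | "f1 = 1" using le f1(1) f2(1) by linarith
  then show False
  proof cases
    case 1
    define k where "k = f1 - 3"
    have k: "f1 = k + 3" using 1 k_def by simp
    let ?u = d1 let ?v = "z ! (k+1)" let ?x = "z ! (k+2)" let ?y = "z ! k" let ?zz = "z ! (k+3)"
    have L: "k + 3 < length z" using f1 k by simp
    have "induced_kite E ?u ?v ?x ?y ?zz"
      unfolding induced_kite_def
    proof (intro conjI)
      show "distinct [?u, ?v, ?x, ?y, ?zz]"
        using zne[of k "k+1"] zne[of k "k+2"] zne[of k "k+3"] zne[of "k+1" "k+2"] zne[of "k+1" "k+3"]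
          zne[of "k+2" "k+3"] nin[OF notin(1), of k] nin[OF notin(1), of "k+1"] nin[OF notin(1), of "k+2"]
          nin[OF notin(1), of "k+3"] L by auto
      show "E ?u ?v" "E ?u ?x" "E ?u ?y" using f1(3) k by auto
      show "E ?v ?x" using zE[of "k+1"] L by simp
      show "E ?v ?y" using zE[of k] L by simp
      show "\<not> E ?x ?y" using ind[rule_format, of k "k+2"] L symE by simp
      show "E ?zz ?x" using zE[of "k+2"] L by (simp add: numeral_eq_Suc)
      show "\<not> E ?zz ?y" using ind[rule_format, of k "k+3"] L symE by simp
      show "\<not> E ?zz ?u" using f1(4) k symE by simp
      show "\<not> E ?zz ?v" using ind[rule_format, of "k+1" "k+3"] L symE by simp
    qed
    moreover have "?u \<in> V" "?v \<in> V" "?x \<in> V" "?y \<in> V" "?zz \<in> V" using inV zV L walk_nonempty[OF w] by auto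
    ultimately show False using nokite by blast
  next
    case 2
    let ?u = d1 let ?v = d2 let ?x = "z ! 1" let ?y = m let ?zz = "z ! 2"
    have L: "2 < length z" using f1 2 by simp
    have "induced_kite E ?u ?v ?x ?y ?zz"
      unfolding induced_kite_def
    proof (intro conjI)
      show "distinct [?u, ?v, ?x, ?y, ?zz]"
        using zne[of 1 2] nin[OF notin(1), of 1] nin[OF notin(1), of 2] nin[OF notin(2), of 1]
          nin[OF notin(2), of 2] nin[OF notin(3), of 1] nin[OF notin(3), of 2] L d12 m by auto
      show "E ?u ?v" using d12 by simp
      show "E ?u ?x" using f1(3) 2 by simp
      show "E ?u ?y" using m symE by simp
      show "E ?v ?x" using f2(3) 2 by simp
      show "E ?v ?y" using m symE by simp
      show "\<not> E ?x ?y" using mz L symE by simp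
      show "E ?zz ?x" using zE[of 1] L by (simp add: numeral_eq_Suc)
      show "\<not> E ?zz ?y" using mz L symE by simp
      show "\<not> E ?zz ?u" using f1(4) 2 symE by simp
      show "\<not> E ?zz ?v" using f2(4) 2 symE by simp
    qed
    moreover have "?u \<in> V" "?v \<in> V" "?x \<in> V" "?y \<in> V" "?zz \<in> V" using inV zV L walk_nonempty[OF w] by auto
    ultimately show False using nokite by blast
  next
    case 3
    have L: "2 < length z" using f1 3 by simp
    show False
    proof (cases "E d2 (z ! 2)")
      case True
      let ?p = "[z ! 0, z ! 1, z ! 2]"
      have wp: "walk_in V E ?p" using zV[of 0] zV[of 1] zV[of 2] zE[of 0] zE[of 1] L walk_nonempty[OF w] by (auto simp: walk_Cons2 numeral_eq_Suc)
      have dp: "distinct ?p" using zne[of 0 1] zne[of 0 2] zne[of 1 2] L walk_nonempty[OF w] by auto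
      have ip: "\<forall>i j. Suc i < j \<and> j < length ?p \<longrightarrow> \<not> E (?p!i) (?p!j)"
        by (rule ind3) (use ind L in auto)
      have "d2 \<notin> set ?p" using nin[OF notin(2), of 0] nin[OF notin(2), of 1] nin[OF notin(2), of 2] L walk_nonempty[OF w] by auto
      moreover have "\<forall>i. 0 < i \<and> i < length ?p - 1 \<longrightarrow> \<not> E d2 (?p!i)"
      proof (intro allI impI)
        fix i assume "0 < i \<and> i < length ?p - 1"
        then have "i = 1" by auto
        then show "\<not> E d2 (?p!i)" using f2(4) 3 by simp
      qed
      ultimately have "induced_cycle V E (d2 # ?p)"
        using cycle_from_path[OF wp dp ip _ inV(2)] f2(3) 3 True by simp
      then show False using ch chordal_def by blast
    next
      case False
      let ?u = d1 let ?v = "z ! 0" let ?x = "z ! 1" let ?y = d2 let ?zz = "z ! 2"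
      have "induced_kite E ?u ?v ?x ?y ?zz"
        unfolding induced_kite_def
      proof (intro conjI)
        show "distinct [?u, ?v, ?x, ?y, ?zz]"
          using zne[of 0 1] zne[of 0 2] zne[of 1 2] nin[OF notin(1), of 0] nin[OF notin(1), of 1] nin[OF notin(1), of 2]
            nin[OF notin(2), of 0] nin[OF notin(2), of 1] nin[OF notin(2), of 2] L d12 walk_nonempty[OF w] by auto
        show "E ?u ?v" "E ?u ?x" using f1(3) 3 by auto
        show "E ?u ?y" using d12 by simp
        show "E ?v ?x" using zE[of 0] L by simp
        show "E ?v ?y" using f2(3) 3 symE by simp
        show "\<not> E ?x ?y" using f2(4) 3 symE by simp
        show "E ?zz ?x" using zE[of 1] L by (simp add: numeral_eq_Suc)
        show "\<not> E ?zz ?y" using False symE by simp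
        show "\<not> E ?zz ?u" using f1(4) 3 symE by simp
        show "\<not> E ?zz ?v" using ind[rule_format, of 0 2] L symE by simp
      qed
      moreover have "?u \<in> V" "?v \<in> V" "?x \<in> V" "?y \<in> V" "?zz \<in> V" using inV zV L walk_nonempty[OF w] by auto
      ultimately show False using nokite by blast
    qed
  next
    case 4
    then have f21: "f2 = 1" using le f2 by simp
    let ?u = d1 let ?v = d2 let ?x = "z ! 0" let ?y = m let ?zz = "z ! 1"
    have L: "1 < length z" using f1 4 by simp
    have "induced_kite E ?u ?v ?x ?y ?zz"
      unfolding induced_kite_def
    proof (intro conjI)
      show "distinct [?u, ?v, ?x, ?y, ?zz]"
        using zne[of 0 1] nin[OF notin(1), of 0] nin[OF notin(1), of 1] nin[OF notin(2), of 0]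
          nin[OF notin(2), of 1] nin[OF notin(3), of 0] nin[OF notin(3), of 1] L d12 m walk_nonempty[OF w] by auto
      show "E ?u ?v" using d12 by simp
      show "E ?u ?x" using f1(3) 4 by simp
      show "E ?u ?y" using m symE by simp
      show "E ?v ?x" using f2(3) f21 by simp
      show "E ?v ?y" using m symE by simp
      show "\<not> E ?x ?y" using mz[rule_format, of 0] L walk_nonempty[OF w] symE by simp
      show "E ?zz ?x" using zE[of 0] L by simp
      show "\<not> E ?zz ?y" using mz L symE by simp
      show "\<not> E ?zz ?u" using f1(4) 4 symE by simp
      show "\<not> E ?zz ?v" using f2(4) f21 symE by simp
    qed
    moreover have "?u \<in> V" "?v \<in> V" "?x \<in> V" "?y \<in> V" "?zz \<in> V" using inV zV L walk_nonempty[OF w] by auto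
    ultimately show False using nokite by blast
  qed
qed

end
context sgraph begin

lemma first_nonadj:
  assumes w: "walk_in V E z" and h: "E d (hd z)" and l: "\<not> E d (last z)"
  shows "\<exists>f. 0 < f \<and> f < length z \<and> (\<forall>i<f. E d (z!i)) \<and> \<not> E d (z!f)"
proof -
  have ne: "z \<noteq> []" using walk_nonempty[OF w] .
  let ?P = "\<lambda>i. i < length z \<and> \<not> E d (z!i)"
  have ex: "?P (length z - 1)" using l ne by (simp add: last_conv_nth)
  define f where "f = (LEAST i. ?P i)"
  have Pf: "?P f" unfolding f_def by (rule LeastI[of ?P, OF ex])
  have lt: "\<forall>i<f. E d (z!i)"
  proof (intro allI impI)
    fix i assume "i < f"
    then have "\<not> ?P i" unfolding f_def by (rule not_less_Least)
    then show "E d (z!i)" using \<open>i < f\<close> Pf by simp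
  qed
  have "f \<noteq> 0"
  proof
    assume "f = 0" then show False using Pf h ne by (simp add: hd_conv_nth)
  qed
  then show ?thesis using Pf lt by blast
qed

lemma kite_path:
  assumes ch: "chordal V E" and kf: "kite_free V E"
    and w: "walk_in V E z" and d: "distinct z"
    and ind: "\<forall>i j. Suc i < j \<and> j < length z \<longrightarrow> \<not> E (z!i) (z!j)"
    and h: "E d1 (hd z)" "E d2 (hd z)" and l: "\<not> E d1 (last z)" "\<not> E d2 (last z)"
    and d12: "E d1 d2" "d1 \<noteq> d2" and m: "E m d1" "E m d2" "m \<noteq> d1" "m \<noteq> d2"
    and mz: "\<forall>x\<in>set z. \<not> E m x"
    and notin: "d1 \<notin> set z" "d2 \<notin> set z" "m \<notin> set z"
    and inV: "d1 \<in> V" "d2 \<in> V" "m \<in> V"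
  shows False
proof -
  obtain f1 where f1: "0 < f1" "f1 < length z" "\<forall>i<f1. E d1 (z!i)" "\<not> E d1 (z!f1)"
    using first_nonadj[OF w h(1) l(1)] by blast
  obtain f2 where f2: "0 < f2" "f2 < length z" "\<forall>i<f2. E d2 (z!i)" "\<not> E d2 (z!f2)"
    using first_nonadj[OF w h(2) l(2)] by blast
  have mz': "\<forall>i<length z. \<not> E m (z!i)" using mz nth_mem by blast
  show False
  proof (cases "f2 \<le> f1")
    case True
    show False by (rule kite_aux[OF ch kf w d ind d12 m mz' notin inV f1 f2 True])
  next
    case False
    then have le: "f1 \<le> f2" by simp
    have d21: "E d2 d1" "d2 \<noteq> d1" using sym[OF d12(1)] d12(2) by auto
    show False by (rule kite_aux[OF ch kf w d ind d21 m(2) m(1) m(4) m(3) mz' notin(2) notin(1) notin(3)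
      inV(2) inV(1) inV(3) f2 f1 le])
  qed
qed

lemma mincut_diff:
  assumes ch: "chordal V E" and kf: "kite_free V E" and fin: "finite V"
    and mC: "mincut V C" and mD: "mincut V D"
  shows "card (D - C) \<le> 1"
proof (rule ccontr)
  assume "\<not> card (D - C) \<le> 1"
  have CV: "C \<subseteq> V" and DV: "D \<subseteq> V" using mC mD mincut_def cut_def by auto
  have "finite (D - C)" using DV fin finite_subset by blast
  then obtain d1 d2 where dd: "d1 \<in> D - C" "d2 \<in> D - C" "d1 \<noteq> d2"
    using \<open>\<not> card (D - C) \<le> 1\<close> card_le_Suc0_iff_eq by (metis One_nat_def)
  have d12: "E d1 d2" using mincut_clique[OF ch mD] dd by blast
  have d1V: "d1 \<in> V - C" and d2V: "d2 \<in> V - C" using dd DV by auto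
  obtain c where c: "c \<in> C" "c \<notin> D"
  proof (rule ccontr)
    assume "\<not> thesis"
    then have "C \<subseteq> D" using that by blast
    then have "C \<subset> D" using dd by blast
    then have "\<not> cut V C" using mD mincut_def by blast
    then show False using mC mincut_def by blast
  qed
  have cV: "c \<in> V - D" using c CV by auto
  have "cut V C" using mC mincut_def by blast
  then obtain l where l: "l \<in> V - C" "\<not> reach (V - C) d1 l" using cut_other[OF _ d1V] by blast
  have r12: "reach (V - C) d1 d2" using reach_edge[OF d1V d2V d12] .
  have l1: "\<not> E d1 l"
  proof
    assume "E d1 l" then have "reach (V - C) d1 l" using reach_edge[OF d1V l(1)] by blast
    then show False using l by simp
  qed
  have l2: "\<not> E d2 l"
  proof
    assume "E d2 l" then have "reach (V - C) d2 l" using reach_edge[OF d2V l(1)] by blast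
    then have "reach (V - C) d1 l" using reach_trans[OF r12] by blast
    then show False using l by simp
  qed
  have RL: "\<And>x. reach (V - C) l x \<Longrightarrow> x \<in> V - D"
  proof -
    fix x assume rx: "reach (V - C) l x"
    have xV: "x \<in> V - C" using reach_in[OF rx] by blast
    show "x \<in> V - D"
    proof (rule ccontr)
      assume "x \<notin> V - D"
      then have xD: "x \<in> D" using xV by blast
      have "x \<noteq> d1"
      proof
        assume "x = d1" then have "reach (V - C) d1 l" using reach_sym[OF rx] by simp
        then show False using l by simp
      qed
      then have "E x d1" using mincut_clique[OF ch mD xD] dd by blast
      then have "reach (V - C) x d1" using reach_edge[OF xV d1V] by blast
      then have "reach (V - C) l d1" using reach_trans[OF rx] by blast
      then show False using l reach_sym by blast
    qed
  qed
  obtain n where n: "E c n" "reach (V - C) l n" using full_comp[OF mC c(1) l(1)] by blast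
  have "reach (V - D) l n" using reach_restrict[OF n(2) RL] .
  moreover have nV: "n \<in> V - D" using RL[OF n(2)] .
  moreover have "reach (V - D) n c" using reach_edge[OF nV cV sym[OF n(1)]] .
  ultimately have rcl: "reach (V - D) c l" using reach_trans reach_sym by blast
  have "cut V D" using mD mincut_def by blast
  then obtain m0 where m0: "m0 \<in> V - D" "\<not> reach (V - D) c m0" using cut_other[OF _ cV] by blast
  have d1D: "d1 \<in> D" and d2D: "d2 \<in> D" using dd by auto
  have d1nV: "d1 \<notin> V - D" and d2nV: "d2 \<notin> V - D" using dd by auto
  have d1VV: "d1 \<in> V" and d2VV: "d2 \<in> V" using d1V d2V by auto
  have cnb: "\<And>b. b \<in> V - D \<Longrightarrow> \<exists>x. reach (V - D) b x \<and> E d1 x \<and> E x d2"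
  proof -
    fix b assume b: "b \<in> V - D"
    define A where "A = {x. reach (V - D) b x}"
    have AV: "A \<subseteq> V" using reach_in A_def by auto
    have d1A: "d1 \<notin> A" and d2A: "d2 \<notin> A" using reach_in A_def d1nV d2nV by auto
    obtain n1 where n1: "E d1 n1" "reach (V - D) b n1" using full_comp[OF mD d1D b] by blast
    obtain n2 where n2: "E d2 n2" "reach (V - D) b n2" using full_comp[OF mD d2D b] by blast
    have r: "reach (V - D) n1 n2" using reach_trans[OF reach_sym[OF n1(2)] n2(2)] .
    have "reach A n1 n2"
    proof (rule reach_restrict[OF r])
      fix x assume "reach (V - D) n1 x"
      then show "x \<in> A" using reach_trans[OF n1(2)] A_def by blast
    qed
    then obtain p where p: "walk_in A E p" "hd p = n1" "last p = n2" using reach_def by auto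
    have w1: "walk_in (A \<union> {d2}) E p" using walk_mono[OF p(1), of "A \<union> {d2}"] by blast
    have w2: "walk_in (A \<union> {d2}) E [d2]" by simp
    have wp: "walk_in (A \<union> {d2}) E (p @ [d2])"
      using walk_append[OF w1 w2] p(3) sym[OF n2(1)] by simp
    have n1A: "n1 \<in> A" using n1 A_def by auto
    have "hd (p @ [d2]) = n1" using p walk_nonempty by (cases p) auto
    moreover have "last (p @ [d2]) = d2" by simp
    ultimately obtain x where "x \<in> A" "E d1 x" "E x d2"
      using common_nbr[OF ch AV d1VV d2VV d1A d2A dd(3) d12 wp] n1A n1(1) by auto
    then show "\<exists>x. reach (V - D) b x \<and> E d1 x \<and> E x d2" using A_def by auto
  qed
  obtain m where m: "reach (V - D) m0 m" "E d1 m" "E m d2" using cnb[OF m0(1)] by blast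
  obtain p0 where p0: "reach (V - D) c p0" "E d1 p0" "E p0 d2" using cnb[OF cV] by blast
  define B where "B = {x. reach (V - D) c x}"
  have BV: "B \<subseteq> V - D" using reach_in B_def by auto
  have "reach B p0 l"
  proof (rule reach_restrict)
    show "reach (V - D) p0 l" using reach_trans[OF reach_sym[OF p0(1)] rcl] .
    fix x assume "reach (V - D) p0 x"
    then show "x \<in> B" using reach_trans[OF p0(1)] B_def by blast
  qed
  then obtain pw where pw: "walk_in B E pw" "hd pw = p0" "last pw = l" using reach_def by auto
  obtain z where z: "walk_in B E z" "hd z = p0" "last z = l" "distinct z"
    "\<forall>i j. Suc i < j \<and> j < length z \<longrightarrow> \<not> E (z!i) (z!j)"
    using min_walk[OF pw(1), of "\<lambda>h. h = p0" "\<lambda>x. x = l"] pw by blast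
  have mV: "m \<in> V - D" using reach_in[OF m(1)] by blast
  have mB: "\<And>x. x \<in> B \<Longrightarrow> \<not> E m x \<and> m \<noteq> x"
  proof -
    fix x assume x: "x \<in> B"
    have xV: "x \<in> V - D" using x BV by blast
    have rcx: "reach (V - D) c x" using x B_def by blast
    show "\<not> E m x \<and> m \<noteq> x"
    proof (intro conjI notI)
      assume "E m x"
      then have "reach (V - D) x m" using reach_edge[OF xV mV] sym by blast
      then have "reach (V - D) c m" using reach_trans[OF rcx] by blast
      then have "reach (V - D) c m0" using reach_trans reach_sym[OF m(1)] by blast
      then show False using m0 by simp
    next
      assume "m = x"
      then have "reach (V - D) c m" using rcx by simp
      then have "reach (V - D) c m0" using reach_trans reach_sym[OF m(1)] by blast
      then show False using m0 by simp
    qed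
  qed
  have zB: "set z \<subseteq> B" using walk_set[OF z(1)] .
  have wV: "walk_in V E z" using walk_mono[OF z(1)] BV by blast
  show False
  proof (rule kite_path[OF ch kf wV z(4) z(5)])
    show "E d1 (hd z)" "E d2 (hd z)" using z(2) p0 sym by auto
    show "\<not> E d1 (last z)" "\<not> E d2 (last z)" using z(3) l1 l2 by auto
    show "E d1 d2" "d1 \<noteq> d2" using d12 dd by auto
    show "E m d1" "E m d2" using m sym by auto
    show "m \<noteq> d1" "m \<noteq> d2" using mV dd by auto
    show "\<forall>x\<in>set z. \<not> E m x" using mB zB by blast
    show "d1 \<notin> set z" "d2 \<notin> set z" using zB BV d1nV d2nV by auto
    show "m \<notin> set z" using mB zB by blast
    show "d1 \<in> V" "d2 \<in> V" "m \<in> V" using d1VV d2VV mV by auto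
  qed
qed

end
context sgraph begin

lemma cds_hits:
  assumes cds: "connected_dominating_set V E S" and ct: "cut V X"
  shows "X \<inter> S \<noteq> {}"
proof
  assume dis: "X \<inter> S = {}"
  have SV: "S \<subseteq> V" and dom: "\<forall>x\<in>V - S. \<exists>y\<in>S. E x y" and con: "connected_on S E"
    using cds unfolding connected_dominating_set_def dominating_set_def by auto
  have SX: "S \<subseteq> V - X" using SV dis by blast
  obtain s where s: "s \<in> S" using con unfolding connected_on_def by blast
  have rs: "\<And>a. a \<in> V - X \<Longrightarrow> reach (V - X) a s"
  proof -
    fix a assume a: "a \<in> V - X"
    have rS: "\<And>y. y \<in> S \<Longrightarrow> reach (V - X) y s"
    proof -
      fix y assume "y \<in> S"
      then obtain p where "walk_in S E p" "hd p = y" "last p = s" using con s \<open>y \<in> S\<close> unfolding connected_on_def by blast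
      then have "reach S y s" using reach_def by blast
      then show "reach (V - X) y s" using reach_mono SX by blast
    qed
    show "reach (V - X) a s"
    proof (cases "a \<in> S")
      case True then show ?thesis using rS by blast
    next
      case False
      then obtain y where y: "y \<in> S" "E a y" using dom a by blast
      have yV: "y \<in> V - X" using y(1) SX by blast
      have "reach (V - X) a y" using reach_edge[OF a yV y(2)] .
      then show ?thesis using reach_trans[OF _ rS[OF y(1)]] by blast
    qed
  qed
  obtain a0 b0 where ab: "a0 \<in> V - X" "b0 \<in> V - X" "\<not> reach (V - X) a0 b0"
    using ct cut_def by auto
  have "reach (V - X) a0 b0" using reach_trans[OF rs[OF ab(1)] reach_sym[OF rs[OF ab(2)]]] .
  then show False using ab(3) by simp
qed

lemma noncds_cut:
  assumes SV: "S \<subseteq> V" and ncds: "\<not> connected_dominating_set V E S"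
    and nc: "a \<in> V" "b \<in> V" "a \<noteq> b" "\<not> E a b"
  shows "\<exists>X. cut V X \<and> X \<inter> S = {}"
proof (cases "S = {}")
  case True
  let ?X = "V - {a, b}"
  have "\<not> reach (V - ?X) a b"
  proof
    assume "reach (V - ?X) a b"
    then obtain p where p: "walk_in (V - ?X) E p" "hd p = a" "last p = b" using reach_def by auto
    obtain i where i: "Suc i < length p" "p ! i \<in> {a}" "p ! Suc i \<notin> {a}"
      using crossing[OF p(1), of "{a}"] p nc(3) by auto
    have "p ! Suc i \<in> V - ?X" using walk_nth_in[OF p(1) i(1)] .
    then have "p ! Suc i = b" using i(3) by auto
    then show False using walk_edge[OF p(1) i(1)] i(2) nc(4) by simp
  qed
  then have "cut V ?X" unfolding cut_def using nc by blast
  then show ?thesis using True by blast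
next
  case False
  then obtain s where s: "s \<in> S" by blast
  show ?thesis
  proof (cases "dominating_set V E S")
    case False
    then obtain x where x: "x \<in> V - S" "\<forall>y\<in>S. \<not> E x y" using False SV unfolding dominating_set_def by blast
    let ?X = "{y \<in> V. E x y}"
    have dis: "?X \<inter> S = {}" using x by auto
    have xin: "x \<in> V - ?X" using x irr by auto
    have sin: "s \<in> V - ?X" using s SV x by auto
    have "\<not> reach (V - ?X) x s"
    proof
      assume "reach (V - ?X) x s"
      then obtain p where p: "walk_in (V - ?X) E p" "hd p = x" "last p = s" using reach_def by auto
      have "s \<noteq> x" using x s by blast
      then have "hd p \<in> {x}" "last p \<notin> {x}" using p by auto
      then obtain i where i: "Suc i < length p" "p ! i \<in> {x}" "p ! Suc i \<notin> {x}"
        using crossing[OF p(1), of "{x}"] by blast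
      have "p ! Suc i \<in> V - ?X" using walk_nth_in[OF p(1) i(1)] .
      moreover have "E x (p ! Suc i)" using walk_edge[OF p(1) i(1)] i(2) by simp
      ultimately show False by auto
    qed
    then have "cut V ?X" unfolding cut_def using xin sin by blast
    then show ?thesis using dis by blast
  next
    case True
    then have nconn: "\<not> connected_on S E" using ncds unfolding connected_dominating_set_def by blast
    then obtain a' b' where ab: "a' \<in> S" "b' \<in> S" "\<forall>p. walk_in S E p \<longrightarrow> \<not> (hd p = a' \<and> last p = b')"
      using nconn s unfolding connected_on_def by blast
    let ?X = "V - S"
    have "V - ?X = S" using SV by blast
    moreover have nr: "\<not> reach S a' b'" using ab(3) unfolding reach_def by blast
    ultimately have "cut V ?X" unfolding cut_def using ab(1,2) by auto
    then show ?thesis by blast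
  qed
qed

lemma cut_mincut:
  assumes fin: "finite V" and ct: "cut V X"
  shows "\<exists>Y. Y \<subseteq> X \<and> mincut V Y"
proof -
  let ?P = "\<lambda>Y. cut V Y \<and> Y \<subseteq> X"
  obtain Y where Y: "?P Y" and Ymin: "\<And>Z. ?P Z \<Longrightarrow> card Y \<le> card Z"
    using ex_has_least_nat[of ?P X card] ct by blast
  have finY: "finite Y" using Y fin cut_def finite_subset by metis
  have "mincut V Y"
    unfolding mincut_def
  proof (intro conjI allI impI notI)
    show "cut V Y" using Y by simp
  next
    fix Z assume Z: "Z \<subset> Y" and cz: "cut V Z"
    then have "card Y \<le> card Z" using Ymin Y by blast
    moreover have "card Z < card Y" using psubset_card_mono[OF finY Z] .
    ultimately show False by simp
  qed
  then show ?thesis using Y by blast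
qed

lemma double_count:
  assumes "finite S" "finite M"
  shows "(\<Sum>v\<in>S. card {X\<in>M. v \<in> X}) = (\<Sum>X\<in>M. card (S \<inter> X))"
proof -
  have c1: "\<And>v. card {X\<in>M. v \<in> X} = (\<Sum>X\<in>M. if v \<in> X then 1 else 0)"
    using sum.inter_filter[OF assms(2), of "\<lambda>_. 1::nat"] by simp
  have c2: "\<And>X. card (S \<inter> X) = (\<Sum>v\<in>S. if v \<in> X then 1 else 0)"
  proof -
    fix X
    have "S \<inter> X = {v\<in>S. v \<in> X}" by auto
    then show "card (S \<inter> X) = (\<Sum>v\<in>S. if v \<in> X then 1 else 0)"
      using sum.inter_filter[OF assms(1), of "\<lambda>_. 1::nat" "\<lambda>v. v \<in> X"] by simp
  qed
  show ?thesis unfolding c1 c2 by (rule sum.swap)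
qed

lemma main_cd:
  assumes fin: "finite V" and ch: "chordal V E" and kf: "kite_free V E"
  shows "\<exists>(w :: 'a \<Rightarrow> real) (t :: real). (\<forall>x\<in>V. w x \<ge> 0) \<and> t \<ge> 0 \<and>
          (\<forall>S. S \<subseteq> V \<longrightarrow> ((\<Sum>x\<in>S. w x) \<ge> t \<longleftrightarrow> connected_dominating_set V E S))"
proof (cases "\<exists>a\<in>V. \<exists>b\<in>V. a \<noteq> b \<and> \<not> E a b")
  case False
  have "\<forall>S. S \<subseteq> V \<longrightarrow> ((\<Sum>x\<in>S. (1::real)) \<ge> 1 \<longleftrightarrow> connected_dominating_set V E S)"
  proof (intro allI impI)
    fix S assume SV: "S \<subseteq> V"
    have finS: "finite S" using SV fin finite_subset by blast
    have "(\<Sum>x\<in>S. (1::real)) = real (card S)" by simp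
    then have "((\<Sum>x\<in>S. (1::real)) \<ge> 1) \<longleftrightarrow> S \<noteq> {}" using finS by (simp add: Suc_le_eq card_gt_0_iff)
    moreover have "connected_dominating_set V E S \<longleftrightarrow> S \<noteq> {}"
    proof
      assume "connected_dominating_set V E S"
      then show "S \<noteq> {}" unfolding connected_dominating_set_def connected_on_def by blast
    next
      assume ne: "S \<noteq> {}"
      have "dominating_set V E S" unfolding dominating_set_def
      proof (intro conjI ballI)
        show "S \<subseteq> V" using SV .
        fix x assume x: "x \<in> V - S"
        obtain s where s: "s \<in> S" using ne by blast
        have "x \<noteq> s" using x s by blast
        then have "E x s" using x s SV \<open>\<not> (\<exists>a\<in>V. \<exists>b\<in>V. a \<noteq> b \<and> \<not> E a b)\<close> by blast
        then show "\<exists>y\<in>S. E x y" using s by blast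
      qed
      moreover have "connected_on S E" unfolding connected_on_def
      proof (intro conjI ballI)
        show "S \<noteq> {}" using ne .
      next
        fix x y assume x: "x \<in> S" and y: "y \<in> S"
        show "\<exists>p. walk_in S E p \<and> hd p = x \<and> last p = y"
        proof (cases "x = y")
          case True then show ?thesis using x by (intro exI[of _ "[x]"]) simp
        next
          case False
          then have "E x y" using x y SV \<open>\<not> (\<exists>a\<in>V. \<exists>b\<in>V. a \<noteq> b \<and> \<not> E a b)\<close> by blast
          then show ?thesis using x y by (intro exI[of _ "[x, y]"]) (simp add: walk_Cons2)
        qed
      qed
      ultimately show "connected_dominating_set V E S" unfolding connected_dominating_set_def by blast
    qed
    ultimately show "((\<Sum>x\<in>S. (1::real)) \<ge> 1) \<longleftrightarrow> connected_dominating_set V E S" by blast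
  qed
  then show ?thesis by (intro exI[of _ "\<lambda>_. 1"] exI[of _ 1]) auto
next
  case True
  then obtain a b where nc: "a \<in> V" "b \<in> V" "a \<noteq> b" "\<not> E a b" by blast
  define M where "M = {X. mincut V X}"
  have MP: "M \<subseteq> Pow V" unfolding M_def mincut_def cut_def by auto
  have finM: "finite M" using finite_subset[OF MP] fin by auto
  define w where "w = (\<lambda>v. real (card {X\<in>M. v \<in> X}))"
  define t where "t = real (card M)"
  have "\<forall>S. S \<subseteq> V \<longrightarrow> ((\<Sum>x\<in>S. w x) \<ge> t \<longleftrightarrow> connected_dominating_set V E S)"
  proof (intro allI impI)
    fix S assume SV: "S \<subseteq> V"
    have finS: "finite S" using SV fin finite_subset by blast
    have sw: "(\<Sum>x\<in>S. w x) = real (\<Sum>X\<in>M. card (S \<inter> X))"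
      unfolding w_def using double_count[OF finS finM] by (simp flip: of_nat_sum)
    show "((\<Sum>x\<in>S. w x) \<ge> t \<longleftrightarrow> connected_dominating_set V E S)"
    proof
      assume ge: "(\<Sum>x\<in>S. w x) \<ge> t"
      show "connected_dominating_set V E S"
      proof (rule ccontr)
        assume "\<not> connected_dominating_set V E S"
        then obtain X where X: "cut V X" "X \<inter> S = {}" using noncds_cut[OF SV _ nc] by blast
        then obtain C where C: "C \<subseteq> X" "mincut V C" using cut_mincut[OF fin] by blast
        have CM: "C \<in> M" using C M_def by simp
        have "(\<Sum>X\<in>M. card (S \<inter> X)) \<le> (\<Sum>X\<in>M. card (X - C))"
        proof (rule sum_mono)
          fix Y assume "Y \<in> M"
          then have "finite Y" using MP fin finite_subset by blast
          moreover have "S \<inter> Y \<subseteq> Y - C" using C X by blast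
          ultimately show "card (S \<inter> Y) \<le> card (Y - C)" by (simp add: card_mono)
        qed
        also have "\<dots> = card (C - C) + (\<Sum>X\<in>M - {C}. card (X - C))"
          using sum.remove[OF finM CM, of "\<lambda>X. card (X - C)"] by simp
        also have "\<dots> \<le> (\<Sum>X\<in>M - {C}. 1)"
        proof -
          have "(\<Sum>X\<in>M - {C}. card (X - C)) \<le> (\<Sum>X\<in>M - {C}. 1)"
          proof (rule sum_mono)
            fix Y assume "Y \<in> M - {C}"
            then have "mincut V Y" using M_def by simp
            then show "card (Y - C) \<le> 1" using mincut_diff[OF ch kf fin C(2)] by blast
          qed
          then show ?thesis by simp
        qed
        also have "\<dots> = card M - 1" using CM finM by simp
        finally have le1: "(\<Sum>X\<in>M. card (S \<inter> X)) \<le> card M - 1" .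
        moreover have "card M > 0" using CM finM card_gt_0_iff by blast
        ultimately have "(\<Sum>X\<in>M. card (S \<inter> X)) < card M" by linarith
        then have "(\<Sum>x\<in>S. w x) < t" unfolding sw t_def using of_nat_less_iff by blast
        then show False using ge by simp
      qed
    next
      assume cds: "connected_dominating_set V E S"
      have "(\<Sum>X\<in>M. (1::nat)) \<le> (\<Sum>X\<in>M. card (S \<inter> X))"
      proof (rule sum_mono)
        fix Y assume "Y \<in> M"
        then have "cut V Y" using M_def mincut_def by simp
        then have "Y \<inter> S \<noteq> {}" using cds_hits[OF cds] by blast
        then have "S \<inter> Y \<noteq> {}" by blast
        then show "1 \<le> card (S \<inter> Y)" using finS by (simp add: Suc_le_eq card_gt_0_iff)
      qed
      then have "card M \<le> (\<Sum>X\<in>M. card (S \<inter> X))" by simp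
      then show "(\<Sum>x\<in>S. w x) \<ge> t" unfolding sw t_def using of_nat_le_iff by blast
    qed
  qed
  moreover have "\<forall>x\<in>V. w x \<ge> 0" "t \<ge> 0" unfolding w_def t_def by auto
  ultimately show ?thesis by blast
qed

end

theorem mainTheorem9:
  fixes V :: "'a set" and E :: "'a \<Rightarrow> 'a \<Rightarrow> bool"
  assumes "simple_graph V E" and "chordal V E" and "kite_free V E"
  shows "hereditarily_connected_domishold V E"
proof -
  have fin: "finite V" and sy: "\<And>x y. E x y \<Longrightarrow> E y x" and ir: "\<And>x. \<not> E x x"
    using assms(1) unfolding simple_graph_def by auto
  interpret sgraph E using sy ir by unfold_locales auto
  show ?thesis unfolding hereditarily_connected_domishold_def
  proof (intro allI impI)
    fix U assume UV: "U \<subseteq> V"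
    have finU: "finite U" using fin UV finite_subset by blast
    have chU: "chordal U E" unfolding chordal_def
    proof
      assume "\<exists>c. induced_cycle U E c"
      then obtain c where "induced_cycle U E c" by blast
      then have "induced_cycle V E c" using UV unfolding induced_cycle_def by blast
      then show False using assms(2) unfolding chordal_def by blast
    qed
    have kfU: "kite_free U E" using assms(3) UV unfolding kite_free_def by blast
    show "connected_domishold U E" unfolding connected_domishold_def
      using main_cd[OF finU chU kfU] by blast
  qed
qed

end
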